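(* Let $T$ be an arbitrary $(\mathcal{F}_t^X)$-stopping time. Then $\mathcal{F}_T^X = \mathcal{F}_{T \wedge T_{\mathrm{expl}}}^X = \sigma\big(\bigcup_{n \geq 1} \mathcal{F}_{T \wedge T_n}^X\big)$.
   Context: $E$ is a closed subset of $\mathbb{R}^d$ and $E_\Delta = E \cup \{\Delta\}$ its one-point compactification. $\Omega$ is the space of càdlàg functions $\omega: \mathbb{R}_+ \to E_\Delta$ such that $\omega(t-) = \Delta$ or $\omega(t) = \Delta$ implies $\omega(s) = \Delta$ for all $s \geq t$. $X_t(\omega) := \omega(t)$ is the coordinate process, $\mathcal{F}^X := \sigma(X_s: s \ge 0)$ and $\mathcal{F}_t^X := \sigma(X_s : 0 \le s \le t)$. Let $\|\cdot\|$ be the Euclidean norm on $\mathbb{R}^d$ with $\|\Delta\| := \infty$. Define the stopping times $T_\Delta := \inf\{t : X_t = \Delta\}$, $T'_n := \inf\{t : \|X_{t-}\| \geq n \text{ or } \|X_t\| \geq n\}$ ($n \ge 1$), $T_{\mathrm{expl}} := T_\Delta$ if $T'_n < T_\Delta$ for all $n$, and $T_{\mathrm{expl}} := \infty$ if $T'_n = T_\Delta$ for some $n$; and $T_n := T'_n$ if $T'_n < T_\Delta$, $T_n := \infty$ if $T'_n = T_\Delta$. *)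

theory Defs
  imports "HOL-Probability.Probability"
begin

text \<open>The one-point compactification E_Delta of a closed set E in R^d is modelled by the
  type 'a option: Some x (x in E) are the points of E and None is the cemetery Delta.\<close>

definition normD :: "'a::real_normed_vector option \<Rightarrow> ereal" where
  "normD x = (case x of None \<Rightarrow> \<infinity> | Some y \<Rightarrow> ereal (norm y))"

text \<open>Convergence in the one-point compactification (for E closed): to a point of E means
  eventually in E and converging there; to Delta means leaving every compact, i.e. norm to infinity.\<close>

definition convD :: "(real \<Rightarrow> 'a::real_normed_vector option) \<Rightarrow> 'a option \<Rightarrow> real filter \<Rightarrow> bool" where
  "convD f l F = (case l of
      None \<Rightarrow> ((\<lambda>t. normD (f t)) \<longlongrightarrow> \<infinity>) F
    | Some x \<Rightarrow> (eventually (\<lambda>t. f t \<noteq> None) F \<and> ((\<lambda>t. the (f t)) \<longlongrightarrow> x) F))"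

text \<open>Left limit omega(t-), with the convention omega(0-) = omega(0).\<close>

definition leftlim :: "(real \<Rightarrow> 'a::real_normed_vector option) \<Rightarrow> real \<Rightarrow> 'a option" where
  "leftlim \<omega> t = (if t \<le> 0 then \<omega> 0 else (THE l. convD \<omega> l (at_left t)))"

text \<open>Path space Omega. Paths are functions on the real line, extended constantly
  (by omega 0) to negative times, so they correspond one-to-one to paths on R_+.\<close>

definition paths :: "'a::real_normed_vector set \<Rightarrow> (real \<Rightarrow> 'a option) set" where
  "paths E = {\<omega>.
      (\<forall>t. \<omega> t \<in> insert None (Some ` E))
    \<and> (\<forall>t<0. \<omega> t = \<omega> 0)
    \<and> (\<forall>t\<ge>0. convD \<omega> (\<omega> t) (at_right t))
    \<and> (\<forall>t>0. \<exists>l. convD \<omega> l (at_left t))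
    \<and> (\<forall>t\<ge>0. (leftlim \<omega> t = None \<or> \<omega> t = None) \<longrightarrow> (\<forall>s\<ge>t. \<omega> s = None))}"

definition borelD :: "'a::euclidean_space set \<Rightarrow> 'a option measure" where
  "borelD E = sigma (insert None (Some ` E))
     (insert {None} {Some ` (B \<inter> E) | B. B \<in> sets borel})"

text \<open>Natural filtration F^X_t, indexed by t in [-inf, inf]; trivial for t < 0 and
  F^X_inf = F^X = sigma(X_s : s >= 0).\<close>

definition natF :: "'a::euclidean_space set \<Rightarrow> ereal \<Rightarrow> (real \<Rightarrow> 'a option) measure" where
  "natF E t = sigma (paths E)
     {{\<omega> \<in> paths E. \<omega> s \<in> A} | s A. 0 \<le> s \<and> ereal s \<le> t \<and> A \<in> sets (borelD E)}"

definition T_Delta :: "(real \<Rightarrow> 'a::real_normed_vector option) \<Rightarrow> ereal" where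
  "T_Delta \<omega> = Inf {ereal t | t. 0 \<le> t \<and> \<omega> t = None}"

definition T'_n :: "nat \<Rightarrow> (real \<Rightarrow> 'a::real_normed_vector option) \<Rightarrow> ereal" where
  "T'_n n \<omega> = Inf {ereal t | t. 0 \<le> t \<and>
      (normD (leftlim \<omega> t) \<ge> ereal (real n) \<or> normD (\<omega> t) \<ge> ereal (real n))}"

definition T_expl :: "(real \<Rightarrow> 'a::real_normed_vector option) \<Rightarrow> ereal" where
  "T_expl \<omega> = (if \<forall>n\<ge>1. T'_n n \<omega> < T_Delta \<omega> then T_Delta \<omega> else \<infinity>)"

definition T_n :: "nat \<Rightarrow> (real \<Rightarrow> 'a::real_normed_vector option) \<Rightarrow> ereal" where
  "T_n n \<omega> = (if T'_n n \<omega> < T_Delta \<omega> then T'_n n \<omega> else \<infinity>)"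

end

theory Submission
  imports Defs
begin


lemma normD_nonneg: "0 \<le> normD x"
  by (auto simp: normD_def split: option.splits)

lemma paths_range: "\<omega> \<in> paths E \<Longrightarrow> \<omega> u \<in> insert None (Some ` E)"
  by (auto simp: paths_def)

lemma paths_right: "\<omega> \<in> paths E \<Longrightarrow> 0 \<le> t \<Longrightarrow> convD \<omega> (\<omega> t) (at_right t)"
  by (auto simp: paths_def)

lemma paths_None: "\<omega> \<in> paths E \<Longrightarrow> 0 \<le> u \<Longrightarrow> leftlim \<omega> u = None \<or> \<omega> u = None \<Longrightarrow> u \<le> s \<Longrightarrow> \<omega> s = None"
  unfolding paths_def by blast

lemma convD_normD:
  assumes "convD \<omega> l F"
  shows "((\<lambda>t. normD (\<omega> t)) \<longlongrightarrow> normD l) F"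
proof (cases l)
  case None
  then show ?thesis using assms by (simp add: convD_def normD_def)
next
  case (Some x)
  with assms have ev: "eventually (\<lambda>t. \<omega> t \<noteq> None) F" and lim: "((\<lambda>t. the (\<omega> t)) \<longlongrightarrow> x) F"
    by (auto simp: convD_def)
  have "((\<lambda>t. ereal (norm (the (\<omega> t)))) \<longlongrightarrow> ereal (norm x)) F"
    by (intro tendsto_intros lim)
  moreover have "eventually (\<lambda>t. ereal (norm (the (\<omega> t))) = normD (\<omega> t)) F"
    using ev by eventually_elim (auto simp: normD_def)
  ultimately have "((\<lambda>t. normD (\<omega> t)) \<longlongrightarrow> ereal (norm x)) F"
    by (rule Lim_transform_eventually)
  then show ?thesis using Some by (simp add: normD_def)
qed

lemma convD_unique:
  assumes "convD \<omega> l1 F" "convD \<omega> l2 F" "F \<noteq> bot"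
  shows "l1 = l2"
proof -
  have n: "normD l1 = normD l2"
    using tendsto_unique[OF assms(3) convD_normD[OF assms(1)] convD_normD[OF assms(2)]] .
  show ?thesis
  proof (cases l1)
    case None
    then show ?thesis using n by (cases l2) (auto simp: normD_def)
  next
    case (Some x)
    then obtain y where y: "l2 = Some y" using n by (cases l2) (auto simp: normD_def)
    have "x = y"
      using tendsto_unique[OF assms(3)] assms(1,2) Some y by (auto simp: convD_def)
    then show ?thesis using Some y by simp
  qed
qed

lemma paths_left:
  assumes "\<omega> \<in> paths E" "0 < t"
  shows "convD \<omega> (leftlim \<omega> t) (at_left t)"
proof -
  obtain l where l: "convD \<omega> l (at_left t)" using assms by (auto simp: paths_def)
  have "(THE l. convD \<omega> l (at_left t)) = l"
    by (rule the_equality[where P="\<lambda>l. convD \<omega> l (at_left t)", OF l]) (auto intro: convD_unique[OF _ l] simp: trivial_limit_at_left_real)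
  then show ?thesis using l assms by (simp add: leftlim_def)
qed

lemma leftlim_0: "t \<le> 0 \<Longrightarrow> leftlim \<omega> t = \<omega> 0"
  by (simp add: leftlim_def)



lemma local_bound:
  assumes p: "\<omega> \<in> paths E" and u: "0 \<le> u"
    and b1: "normD (\<omega> u) < b" and b2: "normD (leftlim \<omega> u) < b"
  shows "\<exists>\<delta>>0. \<exists>c<b. \<forall>q. 0 \<le> q \<and> \<bar>q - u\<bar> < \<delta> \<longrightarrow> normD (\<omega> q) \<le> c \<and> normD (leftlim \<omega> q) \<le> c"
proof -
  obtain c where c1: "max (normD (\<omega> u)) (normD (leftlim \<omega> u)) < c" and c2: "c < b"
    using b1 b2 dense[of "max (normD (\<omega> u)) (normD (leftlim \<omega> u))" b] by auto
  have "eventually (\<lambda>q. normD (\<omega> q) < c) (at_right u)"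
    using order_tendstoD(2)[OF convD_normD[OF paths_right[OF p u]]] c1 by auto
  then obtain \<delta>1 where d1: "\<delta>1 > 0" "\<And>q. u < q \<Longrightarrow> q < u + \<delta>1 \<Longrightarrow> normD (\<omega> q) < c"
    unfolding eventually_at_right_field by (metis add.commute diff_add_cancel diff_gt_0_iff_gt)
  obtain \<delta>2 where d2: "\<delta>2 > 0" "\<And>q. 0 \<le> q \<Longrightarrow> u - \<delta>2 < q \<Longrightarrow> q < u \<Longrightarrow> normD (\<omega> q) < c"
  proof (cases "u = 0")
    case True
    show ?thesis by (rule that[of 1]) (use True in auto)
  next
    case False
    with u have "0 < u" by simp
    have "eventually (\<lambda>q. normD (\<omega> q) < c) (at_left u)"
      using order_tendstoD(2)[OF convD_normD[OF paths_left[OF p \<open>0 < u\<close>]]] c1 by auto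
    then obtain a where "a < u" "\<And>q. a < q \<Longrightarrow> q < u \<Longrightarrow> normD (\<omega> q) < c"
      unfolding eventually_at_left_field by blast
    then show ?thesis by (intro that[of "u - a"]) auto
  qed
  define \<delta> where "\<delta> = min \<delta>1 \<delta>2"
  have pt: "normD (\<omega> q) \<le> c" if "0 \<le> q" "\<bar>q - u\<bar> < \<delta>" for q
  proof -
    consider "q = u" | "u < q" | "q < u" by linarith
    then show ?thesis
    proof cases
      case 1 then show ?thesis using c1 by (simp add: less_imp_le)
    next
      case 2 then show ?thesis using d1 that by (auto simp: \<delta>_def intro: less_imp_le)
    next
      case 3 then show ?thesis using d2 that by (auto simp: \<delta>_def intro: less_imp_le)
    qed
  qed
  have "normD (leftlim \<omega> q) \<le> c" if q: "0 \<le> q" "\<bar>q - u\<bar> < \<delta>" for q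
  proof (cases "q = 0")
    case True
    then show ?thesis using pt[OF q] by (simp add: leftlim_0)
  next
    case False
    with q have "0 < q" by simp
    have "max 0 (u - \<delta>) < q" using q \<open>0 < q\<close> by auto
    then have "eventually (\<lambda>r. r \<in> {max 0 (u - \<delta>)<..<q}) (at_left q)"
      by (rule eventually_at_left_real)
    then have "eventually (\<lambda>r. normD (\<omega> r) \<le> c) (at_left q)"
      by eventually_elim (use q in \<open>auto intro!: pt\<close>)
    then show ?thesis
      using tendsto_upperbound[OF convD_normD[OF paths_left[OF p \<open>0 < q\<close>]]]
      by (simp add: trivial_limit_at_left_real)
  qed
  with pt c2 d1 d2 show ?thesis
    by (intro exI[of _ \<delta>] conjI exI[of _ c]) (auto simp: \<delta>_def)
qed

lemma compact_bound:
  assumes p: "\<omega> \<in> paths E" and s: "0 \<le> s"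
    and b: "\<And>u. 0 \<le> u \<Longrightarrow> u \<le> s \<Longrightarrow> normD (\<omega> u) < b \<and> normD (leftlim \<omega> u) < b"
  shows "\<exists>c<b. \<forall>q. 0 \<le> q \<and> q \<le> s \<longrightarrow> normD (\<omega> q) \<le> c \<and> normD (leftlim \<omega> q) \<le> c"
proof -
  have "\<forall>u\<in>{0..s}. \<exists>\<delta>c. fst \<delta>c > 0 \<and> snd \<delta>c < b \<and> (\<forall>q. 0 \<le> q \<and> \<bar>q - u\<bar> < fst \<delta>c \<longrightarrow>
      normD (\<omega> q) \<le> snd \<delta>c \<and> normD (leftlim \<omega> q) \<le> snd \<delta>c)"
    using local_bound[OF p] b by fastforce
  then obtain DC where DC: "\<And>u. u \<in> {0..s} \<Longrightarrow> fst (DC u) > 0 \<and> snd (DC u) < b \<and> (\<forall>q. 0 \<le> q \<and> \<bar>q - u\<bar> < fst (DC u) \<longrightarrow>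
      normD (\<omega> q) \<le> snd (DC u) \<and> normD (leftlim \<omega> q) \<le> snd (DC u))"
    by metis
  have cov: "{0..s} \<subseteq> (\<Union>u\<in>{0..s}. ball u (fst (DC u)))"
    using DC by force
  obtain K where K: "K \<subseteq> {0..s}" "finite K" "{0..s} \<subseteq> (\<Union>u\<in>K. ball u (fst (DC u)))"
    by (rule compactE_image[OF compact_Icc _ cov]) auto
  have "K \<noteq> {}" using K(3) s by auto
  define c where "c = Max ((\<lambda>u. snd (DC u)) ` K)"
  have "c < b" unfolding c_def using K DC \<open>K \<noteq> {}\<close> by (subst Max_less_iff) auto
  moreover have "normD (\<omega> q) \<le> c \<and> normD (leftlim \<omega> q) \<le> c" if qq: "0 \<le> q" "q \<le> s" for q
  proof -
    obtain u where u: "u \<in> K" "q \<in> ball u (fst (DC u))"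
    proof -
      have "q \<in> {0..s}" using qq by simp
      with K(3) show ?thesis using that by blast
    qed
    then have "normD (\<omega> q) \<le> snd (DC u) \<and> normD (leftlim \<omega> q) \<le> snd (DC u)"
      using DC[of u] K(1) qq by (auto simp: dist_real_def abs_minus_commute)
    moreover have "snd (DC u) \<le> c" unfolding c_def using K u by auto
    ultimately show ?thesis by auto
  qed
  ultimately show ?thesis by blast
qed



lemma T_Delta_nonneg: "0 \<le> T_Delta \<omega>"
  unfolding T_Delta_def by (auto intro!: Inf_greatest)

lemma T'_n_nonneg: "0 \<le> T'_n n \<omega>"
  unfolding T'_n_def by (auto intro!: Inf_greatest)

lemma T_Delta_le_iff:
  assumes p: "\<omega> \<in> paths E" and t: "0 \<le> t"
  shows "T_Delta \<omega> \<le> ereal t \<longleftrightarrow> \<omega> t = None"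
proof
  assume "\<omega> t = None"
  then show "T_Delta \<omega> \<le> ereal t" unfolding T_Delta_def using t by (auto intro!: Inf_lower)
next
  assume le: "T_Delta \<omega> \<le> ereal t"
  show "\<omega> t = None"
  proof (rule ccontr)
    assume nN: "\<omega> t \<noteq> None"
    then obtain x where x: "\<omega> t = Some x" by auto
    have "eventually (\<lambda>q. \<omega> q \<noteq> None) (at_right t)"
      using paths_right[OF p t] x by (simp add: convD_def)
    then obtain b where b: "b > t" "\<And>q. t < q \<Longrightarrow> q < b \<Longrightarrow> \<omega> q \<noteq> None"
      unfolding eventually_at_right_field by blast
    have "ereal b \<le> T_Delta \<omega>"
      unfolding T_Delta_def
    proof (rule Inf_greatest, clarify)
      fix q assume q: "0 \<le> q" "\<omega> q = None"
      show "ereal b \<le> ereal q"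
      proof (rule ccontr)
        assume "\<not> ereal b \<le> ereal q"
        then have "q < b" by simp
        show False
        proof (cases "q \<le> t")
          case True
          then show ?thesis using paths_None[OF p q(1) _ True] q nN by blast
        next
          case False
          then have "t < q" by simp
          then show ?thesis using b(2)[OF _ \<open>q < b\<close>] q by auto
        qed
      qed
    qed
    with le have "ereal b \<le> ereal t" by (rule order_trans[rotated])
    with b(1) show False by simp
  qed
qed

definition condn :: "nat \<Rightarrow> (real \<Rightarrow> 'a::real_normed_vector option) \<Rightarrow> real \<Rightarrow> bool" where
  "condn n \<omega> u \<longleftrightarrow> normD (leftlim \<omega> u) \<ge> ereal (real n) \<or> normD (\<omega> u) \<ge> ereal (real n)"

lemma T'_n_eq: "T'_n n \<omega> = Inf {ereal t | t. 0 \<le> t \<and> condn n \<omega> t}"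
  unfolding T'_n_def condn_def by simp

lemma not_condn: "\<not> condn n \<omega> u \<longleftrightarrow> normD (\<omega> u) < real n \<and> normD (leftlim \<omega> u) < real n"
  unfolding condn_def by auto

lemma T'_n_le_iff:
  assumes p: "\<omega> \<in> paths E" and t: "0 \<le> t"
  shows "T'_n n \<omega> \<le> ereal t \<longleftrightarrow> (\<exists>u. 0 \<le> u \<and> u \<le> t \<and> condn n \<omega> u)"
proof
  assume "\<exists>u. 0 \<le> u \<and> u \<le> t \<and> condn n \<omega> u"
  then obtain u where "0 \<le> u" "u \<le> t" "condn n \<omega> u" by blast
  then have "T'_n n \<omega> \<le> ereal u" unfolding T'_n_eq by (auto intro!: Inf_lower)
  then show "T'_n n \<omega> \<le> ereal t" using \<open>u \<le> t\<close> by (simp add: order_trans)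
next
  assume le: "T'_n n \<omega> \<le> ereal t"
  show "\<exists>u. 0 \<le> u \<and> u \<le> t \<and> condn n \<omega> u"
  proof (rule ccontr)
    assume "\<not> ?thesis"
    then have nc: "\<And>u. 0 \<le> u \<Longrightarrow> u \<le> t \<Longrightarrow> \<not> condn n \<omega> u" by blast
    obtain \<delta> c where d: "\<delta> > 0" "c < ereal (real n)"
      "\<And>q. 0 \<le> q \<Longrightarrow> \<bar>q - t\<bar> < \<delta> \<Longrightarrow> normD (\<omega> q) \<le> c \<and> normD (leftlim \<omega> q) \<le> c"
      using local_bound[OF p t, of "ereal (real n)"] nc[OF t order_refl] unfolding not_condn by blast
    have "ereal (t + \<delta>) \<le> T'_n n \<omega>"
      unfolding T'_n_eq
    proof (rule Inf_greatest, clarify)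
      fix q assume q: "0 \<le> q" "condn n \<omega> q"
      show "ereal (t + \<delta>) \<le> ereal q"
      proof (rule ccontr)
        assume "\<not> ?thesis"
        then have "q < t + \<delta>" by simp
        show False
        proof (cases "q \<le> t")
          case True then show ?thesis using nc q by blast
        next
          case False
          then have "\<bar>q - t\<bar> < \<delta>" using \<open>q < t + \<delta>\<close> by auto
          from d(3)[OF q(1) this] d(2) q(2) show ?thesis
            unfolding condn_def by (meson leD le_less_trans)
        qed
      qed
    qed
    with le have "ereal (t + \<delta>) \<le> ereal t" by (rule order_trans[rotated])
    with d(1) show False by simp
  qed
qed

definition Dset :: "real \<Rightarrow> real set" where
  "Dset t = {q. q \<in> \<rat> \<and> 0 \<le> q \<and> q \<le> t} \<union> {t}"

lemma countable_Dset: "countable (Dset t)"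
proof -
  have "{q. q \<in> \<rat> \<and> 0 \<le> q \<and> q \<le> t} \<subseteq> \<rat>" by auto
  then have "countable {q. q \<in> \<rat> \<and> 0 \<le> q \<and> q \<le> t}"
    using countable_rat countable_subset by blast
  then show ?thesis unfolding Dset_def by simp
qed

lemma exists_condn_iff:
  assumes p: "\<omega> \<in> paths E" and t: "0 \<le> t"
  shows "(\<exists>u. 0 \<le> u \<and> u \<le> t \<and> condn n \<omega> u) \<longleftrightarrow>
    (\<forall>c\<in>\<rat>. c < real n \<longrightarrow> (\<exists>q\<in>Dset t. ereal c < normD (\<omega> q)))"
proof
  assume "\<exists>u. 0 \<le> u \<and> u \<le> t \<and> condn n \<omega> u"
  then obtain u where u: "0 \<le> u" "u \<le> t" "condn n \<omega> u" by blast
  show "\<forall>c\<in>\<rat>. c < real n \<longrightarrow> (\<exists>q\<in>Dset t. ereal c < normD (\<omega> q))"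
  proof (intro ballI impI)
    fix c :: real assume c: "c < real n"
    have right: "\<exists>q\<in>Dset t. ereal c < normD (\<omega> q)" if nu: "normD (\<omega> u) \<ge> real n"
    proof (cases "u = t")
      case True
      have "ereal c < ereal (real n)" using c by simp
      then have "ereal c < normD (\<omega> t)" using nu True by (meson order_less_le_trans)
      then show ?thesis by (intro bexI[of _ t]) (auto simp: Dset_def)
    next
      case False
      with u have "u < t" by simp
      have "ereal c < ereal (real n)" using c by simp
      then have "ereal c < normD (\<omega> u)" using nu by (meson order_less_le_trans)
      then have "eventually (\<lambda>q. ereal c < normD (\<omega> q)) (at_right u)"
        by (rule order_tendstoD(1)[OF convD_normD[OF paths_right[OF p u(1)]]])
      then obtain b where b: "b > u" "\<And>q. u < q \<Longrightarrow> q < b \<Longrightarrow> ereal c < normD (\<omega> q)"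
        unfolding eventually_at_right_field by blast
      obtain r where r: "r \<in> \<rat>" "u < r" "r < min b t"
        using Rats_dense_in_real[of u "min b t"] b \<open>u < t\<close> by auto
      then show ?thesis using b u by (intro bexI[of _ r]) (auto simp: Dset_def)
    qed
    show "\<exists>q\<in>Dset t. ereal c < normD (\<omega> q)"
    proof (cases "normD (\<omega> u) \<ge> real n")
      case True then show ?thesis by (rule right)
    next
      case False
      with u(3) have nl: "normD (leftlim \<omega> u) \<ge> real n" unfolding condn_def by auto
      show ?thesis
      proof (cases "u = 0")
        case True
        then show ?thesis using nl right by (simp add: leftlim_0)
      next
        case False
        with u have "0 < u" by simp
        have "ereal c < ereal (real n)" using c by simp
        then have "ereal c < normD (leftlim \<omega> u)" using nl by (meson order_less_le_trans)
        then have "eventually (\<lambda>q. ereal c < normD (\<omega> q)) (at_left u)"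
          by (rule order_tendstoD(1)[OF convD_normD[OF paths_left[OF p \<open>0 < u\<close>]]])
        then obtain b where b: "b < u" "\<And>q. b < q \<Longrightarrow> q < u \<Longrightarrow> ereal c < normD (\<omega> q)"
          unfolding eventually_at_left_field by blast
        obtain r where r: "r \<in> \<rat>" "max b 0 < r" "r < u"
          using Rats_dense_in_real[of "max b 0" u] b \<open>0 < u\<close> by auto
        then show ?thesis using b u by (intro bexI[of _ r]) (auto simp: Dset_def)
      qed
    qed
  qed
next
  assume R: "\<forall>c\<in>\<rat>. c < real n \<longrightarrow> (\<exists>q\<in>Dset t. ereal c < normD (\<omega> q))"
  show "\<exists>u. 0 \<le> u \<and> u \<le> t \<and> condn n \<omega> u"
  proof (rule ccontr)
    assume "\<not> ?thesis"
    then have "\<And>u. 0 \<le> u \<Longrightarrow> u \<le> t \<Longrightarrow> normD (\<omega> u) < real n \<and> normD (leftlim \<omega> u) < real n"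
      using not_condn by blast
    from compact_bound[OF p t this] obtain c0 where
      c0: "c0 < ereal (real n)" "\<And>q. 0 \<le> q \<Longrightarrow> q \<le> t \<Longrightarrow> normD (\<omega> q) \<le> c0"
      by blast
    have "0 \<le> c0" using c0(2)[OF order_refl t] normD_nonneg order_trans by blast
    then obtain c0' where c0': "c0 = ereal c0'" using c0(1) by (cases c0) auto
    obtain c where c: "c \<in> \<rat>" "c0' < c" "c < real n"
      using Rats_dense_in_real[of c0' "real n"] c0(1) c0' by auto
    then obtain q where q: "q \<in> Dset t" "ereal c < normD (\<omega> q)" using R by blast
    have "0 \<le> q" "q \<le> t" using q(1) t by (auto simp: Dset_def)
    then have "normD (\<omega> q) \<le> c0" by (rule c0(2))
    with q(2) have "ereal c < ereal c0'" using c0' by (metis order_less_le_trans)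
    with c show False by simp
  qed
qed

lemma explosion_sup:
  assumes p: "\<omega> \<in> paths E" and s: "0 \<le> s" and lt: "ereal s < T_Delta \<omega>"
  shows "\<exists>n\<ge>1. ereal s < T'_n n \<omega>"
proof -
  obtain z where z: "ereal s < z" "z < T_Delta \<omega>" using dense[OF lt] by blast
  then obtain s' where s': "z = ereal s'" by (cases z) auto
  have s's: "s < s'" "0 \<le> s'" using z s' s by auto
  have fin: "normD (\<omega> u) < \<infinity> \<and> normD (leftlim \<omega> u) < \<infinity>" if u: "0 \<le> u" "u \<le> s'" for u
  proof -
    have "\<omega> u \<noteq> None"
    proof
      assume "\<omega> u = None"
      then have "T_Delta \<omega> \<le> ereal u" using T_Delta_le_iff[OF p u(1)] by simp
      moreover have "ereal u \<le> ereal s'" using u by simp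
      ultimately show False using z s' by (metis leD order_trans)
    qed
    moreover have "leftlim \<omega> u \<noteq> None"
    proof
      assume "leftlim \<omega> u = None"
      then have "\<omega> u = None" using paths_None[OF p u(1) _ order_refl] by simp
      with \<open>\<omega> u \<noteq> None\<close> show False by simp
    qed
    ultimately show ?thesis by (auto simp: normD_def)
  qed
  obtain c where c: "c < \<infinity>" "\<And>q. 0 \<le> q \<Longrightarrow> q \<le> s' \<Longrightarrow> normD (\<omega> q) \<le> c \<and> normD (leftlim \<omega> q) \<le> c"
    using compact_bound[OF p s's(2) fin] by blast
  obtain n :: nat where n: "c < ereal (real n)" "n \<ge> 1"
  proof -
    have "0 \<le> c" using c(2)[OF order_refl s's(2)] normD_nonneg order_trans by blast
    then obtain c' where c': "c = ereal c'" using c(1) by (cases c) auto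
    obtain m :: nat where "c' < real m" using reals_Archimedean2 by blast
    then show ?thesis using c' by (intro that[of "m + 1"]) auto
  qed
  have "ereal s' \<le> T'_n n \<omega>"
    unfolding T'_n_eq
  proof (rule Inf_greatest, clarify)
    fix q assume q: "0 \<le> q" "condn n \<omega> q"
    show "ereal s' \<le> ereal q"
    proof (rule ccontr)
      assume "\<not> ?thesis"
      then have "q \<le> s'" by simp
      from c(2)[OF q(1) this] n(1) q(2) show False
        unfolding condn_def by (meson leD le_less_trans)
    qed
  qed
  moreover have "ereal s < ereal s'" using s's by simp
  ultimately have "ereal s < T'_n n \<omega>" by (metis order_less_le_trans)
  then show ?thesis using n by blast
qed



lemma natF_gen_sub:
  "{{\<omega> \<in> paths E. \<omega> s \<in> A} | s A. 0 \<le> s \<and> ereal s \<le> t \<and> A \<in> sets (borelD E)} \<subseteq> Pow (paths E)"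
  by auto

lemma space_natF[simp]: "space (natF E t) = paths E"
  unfolding natF_def by (rule space_measure_of[OF natF_gen_sub])

lemma sets_natF: "sets (natF E t) = sigma_sets (paths E)
   {{\<omega> \<in> paths E. \<omega> s \<in> A} | s A. 0 \<le> s \<and> ereal s \<le> t \<and> A \<in> sets (borelD E)}"
  unfolding natF_def by (rule sets_measure_of[OF natF_gen_sub])

lemma natF_basic:
  "0 \<le> s \<Longrightarrow> ereal s \<le> t \<Longrightarrow> A \<in> sets (borelD E) \<Longrightarrow> {\<omega> \<in> paths E. \<omega> s \<in> A} \<in> sets (natF E t)"
  unfolding sets_natF by (rule sigma_sets.Basic) blast

lemma natF_basic_pred:
  "0 \<le> s \<Longrightarrow> ereal s \<le> t \<Longrightarrow> A \<in> sets (borelD E) \<Longrightarrow> Measurable.pred (natF E t) (\<lambda>\<omega>. \<omega> s \<in> A)"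
  unfolding pred_def using natF_basic by simp

lemma filtration_natF: "filtration (paths E) (natF E)"
proof
  show "space (natF E i) = paths E" for i by simp
  show "sets (natF E i) \<subseteq> sets (natF E j)" if "i \<le> j" for i j
    unfolding sets_natF using that
    by (intro sigma_sets_mono') (auto intro: order_trans)
qed

lemma borelD_gen_sub:
  "insert {None} {Some ` (B \<inter> E) | B. B \<in> sets borel} \<subseteq> Pow (insert None (Some ` E))"
  by auto

lemma sets_borelD: "sets (borelD E) = sigma_sets (insert None (Some ` E)) (insert {None} {Some ` (B \<inter> E) | B. B \<in> sets borel})"
  unfolding borelD_def by (rule sets_measure_of[OF borelD_gen_sub])

lemma None_borelD: "{None} \<in> sets (borelD E)"
  unfolding sets_borelD by (rule sigma_sets.Basic) simp

definition Bc :: "'a::euclidean_space set \<Rightarrow> real \<Rightarrow> 'a option set" where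
  "Bc E c = {None} \<union> Some ` ({y. c < norm y} \<inter> E)"

lemma Bc_borelD: "Bc E c \<in> sets (borelD E)"
proof -
  have "{y::'a. c < norm y} \<in> sets borel"
    by (intro borel_open open_Collect_less continuous_intros)
  then have "Some ` ({y. c < norm y} \<inter> E) \<in> sets (borelD E)"
    unfolding sets_borelD by (intro sigma_sets.Basic) blast
  then show ?thesis unfolding Bc_def using None_borelD by (rule sets.Un[rotated])
qed

lemma Bc_iff: "\<omega> \<in> paths E \<Longrightarrow> \<omega> q \<in> Bc E c \<longleftrightarrow> ereal c < normD (\<omega> q)"
  using paths_range[of \<omega> E q] by (auto simp: Bc_def normD_def)

lemma pred_False: "Measurable.pred M (\<lambda>x. False)"
  unfolding pred_def by simp

lemma pred_True: "Measurable.pred M (\<lambda>x. True)"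
  unfolding pred_def by simp

lemma stopping_time_T'_n: "stopping_time (natF E) (T'_n n)"
proof (rule stopping_timeI)
  fix t :: ereal
  show "Measurable.pred (natF E t) (\<lambda>\<omega>. T'_n n \<omega> \<le> t)"
  proof (cases t)
    case (real r)
    show ?thesis
    proof (cases "0 \<le> r")
      case True
      show ?thesis
      proof (rule measurable_cong[THEN iffD2])
        fix \<omega> assume "\<omega> \<in> space (natF E t)"
        then have p: "\<omega> \<in> paths E" by simp
        show "T'_n n \<omega> \<le> t \<longleftrightarrow> (\<forall>c\<in>{c\<in>\<rat>. c < real n}. \<exists>q\<in>Dset r. \<omega> q \<in> Bc E c)"
          unfolding real T'_n_le_iff[OF p True] exists_condn_iff[OF p True] Bc_iff[OF p] by auto
      next
        have cq: "countable {c\<in>\<rat>. c < real n}"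
          by (rule countable_subset[OF _ countable_rat]) auto
        show "Measurable.pred (natF E t) (\<lambda>\<omega>. \<forall>c\<in>{c\<in>\<rat>. c < real n}. \<exists>q\<in>Dset r. \<omega> q \<in> Bc E c)"
        proof (intro measurable_pred_countable[OF cq] measurable_pred_countable[OF countable_Dset])
          fix c q assume "q \<in> Dset r"
          then have "0 \<le> q" "ereal q \<le> t" using True real by (auto simp: Dset_def)
          then show "Measurable.pred (natF E t) (\<lambda>\<omega>. \<omega> q \<in> Bc E c)"
            by (intro natF_basic_pred Bc_borelD)
        qed
      qed
    next
      case False
      have "\<not> T'_n n \<omega> \<le> t" for \<omega> :: "real \<Rightarrow> 'a option"
      proof
        assume "T'_n n \<omega> \<le> t"
        with T'_n_nonneg[of n \<omega>] have "0 \<le> t" by (rule order_trans)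
        with False real show False by simp
      qed
      then show ?thesis by (simp add: pred_False)
    qed
  next
    case PInf then show ?thesis by (simp add: pred_True)
  next
    case MInf
    have "T'_n n \<omega> \<le> t \<longleftrightarrow> False" for \<omega> :: "real \<Rightarrow> 'a option"
      using T'_n_nonneg[of n \<omega>] MInf by auto
    then show ?thesis by (simp add: pred_False)
  qed
qed

lemma stopping_time_T_Delta: "stopping_time (natF E) T_Delta"
proof (rule stopping_timeI)
  fix t :: ereal
  show "Measurable.pred (natF E t) (\<lambda>\<omega>. T_Delta \<omega> \<le> t)"
  proof (cases t)
    case (real r)
    show ?thesis
    proof (cases "0 \<le> r")
      case True
      show ?thesis
      proof (rule measurable_cong[THEN iffD2])
        fix \<omega> assume "\<omega> \<in> space (natF E t)"
        then have p: "\<omega> \<in> paths E" by simp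
        show "T_Delta \<omega> \<le> t \<longleftrightarrow> \<omega> r \<in> {None}"
          unfolding real T_Delta_le_iff[OF p True] by simp
      next
        show "Measurable.pred (natF E t) (\<lambda>\<omega>. \<omega> r \<in> {None})"
          using True real by (intro natF_basic_pred None_borelD) auto
      qed
    next
      case False
      have "\<not> T_Delta \<omega> \<le> t" for \<omega> :: "real \<Rightarrow> 'a option"
      proof
        assume "T_Delta \<omega> \<le> t"
        with T_Delta_nonneg[of \<omega>] have "0 \<le> t" by (rule order_trans)
        with False real show False by simp
      qed
      then show ?thesis by (simp add: pred_False)
    qed
  next
    case PInf then show ?thesis by (simp add: pred_True)
  next
    case MInf
    have "T_Delta \<omega> \<le> t \<longleftrightarrow> False" for \<omega> :: "real \<Rightarrow> 'a option"
      using T_Delta_nonneg[of \<omega>] MInf by auto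
    then show ?thesis by (simp add: pred_False)
  qed
qed

lemma rat_between_ereal:
  fixes a b :: ereal
  assumes "0 \<le> a" "a < b"
  shows "\<exists>r\<in>\<rat>. a < ereal r \<and> ereal r < b"
proof -
  obtain a' where a': "a = ereal a'" using assms by (cases a) auto
  show ?thesis
  proof (cases b)
    case (real b')
    then obtain r where "r \<in> \<rat>" "a' < r" "r < b'" using Rats_dense_in_real[of a' b'] assms a' by auto
    then show ?thesis using a' real by auto
  next
    case PInf
    then obtain r where "r \<in> \<rat>" "a' < r" "r < a' + 1" using Rats_dense_in_real[of a' "a' + 1"] by auto
    then show ?thesis using a' PInf by auto
  next
    case MInf then show ?thesis using assms by auto
  qed
qed

lemma countable_rat_le: "countable {r \<in> \<rat>. P r}"
  by (rule countable_subset[OF _ countable_rat]) auto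


lemma stopping_time_T_n: "stopping_time (natF E) (T_n n)"
proof (rule stopping_timeI)
  fix t :: ereal
  show "Measurable.pred (natF E t) (\<lambda>\<omega>. T_n n \<omega> \<le> t)"
  proof (cases "t = \<infinity>")
    case True then show ?thesis by (simp add: pred_True)
  next
    case False
    show ?thesis
    proof (rule measurable_cong[THEN iffD2])
      fix \<omega> assume "\<omega> \<in> space (natF E t)"
      have "T_n n \<omega> \<le> t \<longleftrightarrow> T'_n n \<omega> < T_Delta \<omega> \<and> T'_n n \<omega> \<le> t"
        using False by (auto simp: T_n_def)
      also have "\<dots> \<longleftrightarrow> T'_n n \<omega> \<le> t \<and> (t < T_Delta \<omega> \<or>
          (\<exists>r\<in>{r\<in>\<rat>. ereal r \<le> t}. T'_n n \<omega> \<le> ereal r \<and> \<not> T_Delta \<omega> \<le> ereal r))"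
      proof (rule iffI)
        assume a: "T'_n n \<omega> < T_Delta \<omega> \<and> T'_n n \<omega> \<le> t"
        show "T'_n n \<omega> \<le> t \<and> (t < T_Delta \<omega> \<or>
          (\<exists>r\<in>{r\<in>\<rat>. ereal r \<le> t}. T'_n n \<omega> \<le> ereal r \<and> \<not> T_Delta \<omega> \<le> ereal r))"
        proof (cases "t < T_Delta \<omega>")
          case True then show ?thesis using a by simp
        next
          case F: False
          obtain r where r: "r \<in> \<rat>" "T'_n n \<omega> < ereal r" "ereal r < T_Delta \<omega>"
            using rat_between_ereal[OF T'_n_nonneg] a by blast
          have "ereal r \<le> t" using r(3) F by auto
          then show ?thesis using a r by (intro conjI disjI2 bexI[of _ r]) auto
        qed
      next
        assume "T'_n n \<omega> \<le> t \<and> (t < T_Delta \<omega> \<or>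
          (\<exists>r\<in>{r\<in>\<rat>. ereal r \<le> t}. T'_n n \<omega> \<le> ereal r \<and> \<not> T_Delta \<omega> \<le> ereal r))"
        then show "T'_n n \<omega> < T_Delta \<omega> \<and> T'_n n \<omega> \<le> t"
          by (auto intro: le_less_trans order_le_less_trans)
      qed
      finally show "T_n n \<omega> \<le> t \<longleftrightarrow> T'_n n \<omega> \<le> t \<and> (t < T_Delta \<omega> \<or>
          (\<exists>r\<in>{r\<in>\<rat>. ereal r \<le> t}. T'_n n \<omega> \<le> ereal r \<and> \<not> T_Delta \<omega> \<le> ereal r))" .
    next
      show "Measurable.pred (natF E t) (\<lambda>\<omega>. T'_n n \<omega> \<le> t \<and> (t < T_Delta \<omega> \<or>
          (\<exists>r\<in>{r\<in>\<rat>. ereal r \<le> t}. T'_n n \<omega> \<le> ereal r \<and> \<not> T_Delta \<omega> \<le> ereal r)))"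
        by (intro pred_intros_logic stopping_timeD stopping_time_T'_n stopping_timeD2 stopping_time_T_Delta
            measurable_pred_countable[OF countable_rat_le] filtration.stopping_time_le_const[OF filtration_natF]) auto
    qed
  qed
qed

lemma stopping_time_T_expl: "stopping_time (natF E) T_expl"
proof (rule stopping_timeI)
  fix t :: ereal
  show "Measurable.pred (natF E t) (\<lambda>\<omega>. T_expl \<omega> \<le> t)"
  proof (cases "t = \<infinity>")
    case True then show ?thesis by (simp add: pred_True)
  next
    case False
    show ?thesis
    proof (rule measurable_cong[THEN iffD2])
      fix \<omega> assume "\<omega> \<in> space (natF E t)"
      show "T_expl \<omega> \<le> t \<longleftrightarrow> T_Delta \<omega> \<le> t \<and> (\<forall>n\<in>{1::nat..}.
          (\<exists>r\<in>{r\<in>\<rat>. ereal r \<le> t}. T'_n n \<omega> \<le> ereal r \<and> \<not> T_Delta \<omega> \<le> ereal r))"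
      proof (rule iffI)
        assume a: "T_expl \<omega> \<le> t"
        then have c: "\<forall>n\<ge>1. T'_n n \<omega> < T_Delta \<omega>" using False by (auto simp: T_expl_def split: if_splits)
        with a have td: "T_Delta \<omega> \<le> t" by (simp add: T_expl_def)
        have "\<exists>r\<in>{r\<in>\<rat>. ereal r \<le> t}. T'_n n \<omega> \<le> ereal r \<and> \<not> T_Delta \<omega> \<le> ereal r"
          if "n \<in> {1::nat..}" for n
        proof -
          have "T'_n n \<omega> < T_Delta \<omega>" using c that by auto
          then obtain r where r: "r \<in> \<rat>" "T'_n n \<omega> < ereal r" "ereal r < T_Delta \<omega>"
            using rat_between_ereal[OF T'_n_nonneg] by blast
          have "ereal r \<le> t" using r(3) td by auto
          then show ?thesis using r by (intro bexI[of _ r]) auto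
        qed
        with td show "T_Delta \<omega> \<le> t \<and> (\<forall>n\<in>{1::nat..}.
          (\<exists>r\<in>{r\<in>\<rat>. ereal r \<le> t}. T'_n n \<omega> \<le> ereal r \<and> \<not> T_Delta \<omega> \<le> ereal r))"
          by blast
      next
        assume a': "T_Delta \<omega> \<le> t \<and> (\<forall>n\<in>{1::nat..}.
          (\<exists>r\<in>{r\<in>\<rat>. ereal r \<le> t}. T'_n n \<omega> \<le> ereal r \<and> \<not> T_Delta \<omega> \<le> ereal r))"
        then have a: "T_Delta \<omega> \<le> t" "\<forall>n\<in>{1::nat..}.
          (\<exists>r\<in>{r\<in>\<rat>. ereal r \<le> t}. T'_n n \<omega> \<le> ereal r \<and> \<not> T_Delta \<omega> \<le> ereal r)" by auto
        have "\<forall>n\<ge>1. T'_n n \<omega> < T_Delta \<omega>"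
        proof (intro allI impI)
          fix n :: nat assume "n \<ge> 1"
          then obtain r where "T'_n n \<omega> \<le> ereal r" "\<not> T_Delta \<omega> \<le> ereal r" using a(2) by auto
          then show "T'_n n \<omega> < T_Delta \<omega>" by auto
        qed
        then show "T_expl \<omega> \<le> t" using a(1) by (simp add: T_expl_def)
      qed
    next
      show "Measurable.pred (natF E t) (\<lambda>\<omega>. T_Delta \<omega> \<le> t \<and> (\<forall>n\<in>{1::nat..}.
          (\<exists>r\<in>{r\<in>\<rat>. ereal r \<le> t}. T'_n n \<omega> \<le> ereal r \<and> \<not> T_Delta \<omega> \<le> ereal r)))"
        by (intro pred_intros_logic stopping_timeD stopping_time_T'_n stopping_time_T_Delta
            measurable_pred_countable[OF countable_rat_le] measurable_pred_countable[OF countableI_type]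
            filtration.stopping_time_le_const[OF filtration_natF]) auto
    qed
  qed
qed



abbreviation PS :: "'a::euclidean_space set \<Rightarrow> ((real \<Rightarrow> 'a option) \<Rightarrow> ereal) \<Rightarrow> (real \<Rightarrow> 'a option) measure" where
  "PS E S \<equiv> filtration.pre_sigma (paths E) (natF E) S"

definition CS :: "'a::euclidean_space set \<Rightarrow> ((real \<Rightarrow> 'a option) \<Rightarrow> ereal) \<Rightarrow> (real \<Rightarrow> 'a option) set set" where
  "CS E S = {A. \<forall>t. {\<omega>\<in>A. S \<omega> \<le> t} \<in> sets (natF E t)}"

lemma CS_Pow: "CS E S \<subseteq> Pow (paths E)"
proof
  fix A assume "A \<in> CS E S"
  then have "{\<omega>\<in>A. S \<omega> \<le> \<infinity>} \<in> sets (natF E \<infinity>)" unfolding CS_def by blast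
  moreover have "{\<omega>\<in>A. S \<omega> \<le> \<infinity>} = A" by auto
  ultimately have "A \<in> sets (natF E \<infinity>)" by simp
  from sets.sets_into_space[OF this] show "A \<in> Pow (paths E)" by simp
qed

lemma sets_PS: "sets (PS E S) = sigma_sets (paths E) (CS E S)"
  unfolding filtration.pre_sigma_def[OF filtration_natF] CS_def[symmetric]
  by (rule sets_measure_of[OF CS_Pow])

lemma sets_PS_stop: "stopping_time (natF E) S \<Longrightarrow> sets (PS E S) = CS E S"
  unfolding CS_def by (rule filtration.sets_pre_sigma[OF filtration_natF])

lemma CS_in_PS: "A \<in> CS E S \<Longrightarrow> A \<in> sets (PS E S)"
proof -
  assume "A \<in> CS E S"
  then have "A \<in> sigma_sets (paths E) (CS E S)" by (rule sigma_sets.Basic)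
  then show ?thesis by (simp only: sets_PS)
qed

lemma space_PS[simp]: "space (PS E S) = paths E"
  by (rule filtration.space_pre_sigma[OF filtration_natF])

lemma mono_PS:
  assumes T: "stopping_time (natF E) T" and le: "\<And>\<omega>. \<omega> \<in> paths E \<Longrightarrow> S \<omega> \<le> T \<omega>"
  shows "sets (PS E S) \<subseteq> sets (PS E T)"
proof -
  have "CS E S \<subseteq> CS E T"
  proof
    fix A assume A: "A \<in> CS E S"
    then have Ap: "A \<subseteq> paths E" using CS_Pow by blast
    show "A \<in> CS E T" unfolding CS_def
    proof (intro CollectI allI)
      fix t
      have a1: "{\<omega>\<in>A. S \<omega> \<le> t} \<in> sets (natF E t)" using A by (simp add: CS_def)
      have a2: "{\<omega>\<in>space (natF E t). T \<omega> \<le> t} \<in> sets (natF E t)"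
        using stopping_timeD[OF T, of t] unfolding pred_def .
      have "{\<omega>\<in>A. S \<omega> \<le> t} \<inter> {\<omega>\<in>space (natF E t). T \<omega> \<le> t} \<in> sets (natF E t)"
        using a1 a2 by (rule sets.Int)
      also have "{\<omega>\<in>A. S \<omega> \<le> t} \<inter> {\<omega>\<in>space (natF E t). T \<omega> \<le> t} = {\<omega>\<in>A. T \<omega> \<le> t}"
      proof (rule set_eqI)
        fix \<omega>
        show "\<omega> \<in> {\<omega>\<in>A. S \<omega> \<le> t} \<inter> {\<omega>\<in>space (natF E t). T \<omega> \<le> t} \<longleftrightarrow> \<omega> \<in> {\<omega>\<in>A. T \<omega> \<le> t}"
        proof
          assume "\<omega> \<in> {\<omega>\<in>A. T \<omega> \<le> t}"
          then have w: "\<omega> \<in> A" "T \<omega> \<le> t" by auto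
          then have "\<omega> \<in> paths E" using Ap by blast
          then have "S \<omega> \<le> t" using le w(2) by (blast intro: order_trans)
          then show "\<omega> \<in> {\<omega>\<in>A. S \<omega> \<le> t} \<inter> {\<omega>\<in>space (natF E t). T \<omega> \<le> t}"
            using w \<open>\<omega> \<in> paths E\<close> by simp
        qed simp
      qed
      finally show "{\<omega>\<in>A. T \<omega> \<le> t} \<in> sets (natF E t)" .
    qed
  qed
  then have "sigma_sets (paths E) (CS E S) \<subseteq> sigma_sets (paths E) (CS E T)"
    by (rule sigma_sets_mono')
  also have "\<dots> = CS E T"
    unfolding CS_def
    by (rule sigma_algebra.sigma_sets_eq[OF filtration.sigma_algebra_pre_sigma[OF filtration_natF T]])
  finally show ?thesis unfolding sets_PS_stop[OF T] sets_PS[of E S] .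
qed

lemma T_n_le_T_expl: "1 \<le> n \<Longrightarrow> T_n n \<omega> \<le> T_expl \<omega>"
proof -
  assume n: "1 \<le> n"
  show ?thesis
  proof (cases "T'_n n \<omega> < T_Delta \<omega>")
    case True
    then have e: "T_n n \<omega> = T'_n n \<omega>" unfolding T_n_def by (rule if_P)
    show ?thesis
    proof (cases "\<forall>n\<ge>1. T'_n n \<omega> < T_Delta \<omega>")
      case True
      then have "T_expl \<omega> = T_Delta \<omega>" unfolding T_expl_def by (rule if_P)
      with e \<open>T'_n n \<omega> < T_Delta \<omega>\<close> show ?thesis by (simp add: order_less_imp_le)
    next
      case False
      then have "T_expl \<omega> = \<infinity>" unfolding T_expl_def by (rule if_not_P)
      then show ?thesis by simp
    qed
  next
    case False
    then have "\<not> (\<forall>n\<ge>1. T'_n n \<omega> < T_Delta \<omega>)" using n by blast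
    then have "T_expl \<omega> = \<infinity>" unfolding T_expl_def by (rule if_not_P)
    then show ?thesis by simp
  qed
qed



context
  fixes E :: "'a::euclidean_space set" and T :: "(real \<Rightarrow> 'a option) \<Rightarrow> ereal"
  assumes T: "stopping_time (natF E) T"
begin

definition Sn :: "nat \<Rightarrow> (real \<Rightarrow> 'a option) \<Rightarrow> ereal" where
  "Sn n = (\<lambda>\<omega>. min (T \<omega>) (T_n n \<omega>))"

lemma Sn_stop: "stopping_time (natF E) (Sn n)"
  unfolding Sn_def by (intro stopping_time_min T stopping_time_T_n)

definition Sig where
  "Sig = sigma_sets (paths E) (\<Union>n\<in>{1..}. sets (PS E (Sn n)))"

lemma Sig_gen_Pow: "(\<Union>n\<in>{1..}. sets (PS E (Sn n))) \<subseteq> Pow (paths E)"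
  using sets.sets_into_space[of _ "PS E (Sn _)"] by auto

lemma sa_Sig: "sigma_algebra (paths E) Sig"
  unfolding Sig_def by (rule sigma_algebra_sigma_sets[OF Sig_gen_Pow])

lemma in_Sig: "n \<ge> 1 \<Longrightarrow> X \<in> sets (PS E (Sn n)) \<Longrightarrow> X \<in> Sig"
  unfolding Sig_def by (rule sigma_sets.Basic) auto

lemma PS_Sn_borel: "{\<omega>\<in>paths E. P (Sn n \<omega>)} \<in> sets (PS E (Sn n))" if "P \<in> borel \<rightarrow>\<^sub>M count_space UNIV"
proof -
  have "(\<lambda>x. P (Sn n x)) -` {True} \<inter> space (PS E (Sn n)) \<in> sets (PS E (Sn n))"
    by (rule measurable_sets[OF measurable_compose[OF filtration.measurable_stopping_time_pre_sigma[OF filtration_natF Sn_stop] that]]) simp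
  also have "(\<lambda>x. P (Sn n x)) -` {True} \<inter> space (PS E (Sn n)) = {\<omega>\<in>paths E. P (Sn n \<omega>)}"
    by auto
  finally show ?thesis .
qed

lemma less_T_n_in_PS:
  assumes A: "A \<in> sets (PS E T)"
  shows "{\<omega>\<in>A. T \<omega> < T_n n \<omega>} \<in> sets (PS E (Sn n))"
proof (rule CS_in_PS, unfold CS_def, intro CollectI allI)
  fix t
  have "{\<omega>\<in>paths E. T \<omega> < T_n n \<omega>} \<in> sets (PS E T)"
    using filtration.stopping_time_less[OF filtration_natF T stopping_time_T_n, of n]
    by (simp add: pred_def)
  with A have "A \<inter> {\<omega>\<in>paths E. T \<omega> < T_n n \<omega>} \<in> sets (PS E T)" by auto
  from filtration.sets_pre_sigmaD[OF filtration_natF T this, of t]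
  have "{\<omega> \<in> A \<inter> {\<omega>\<in>paths E. T \<omega> < T_n n \<omega>}. T \<omega> \<le> t} \<in> sets (natF E t)" .
  also have "{\<omega> \<in> A \<inter> {\<omega>\<in>paths E. T \<omega> < T_n n \<omega>}. T \<omega> \<le> t} = {\<omega> \<in> {\<omega>\<in>A. T \<omega> < T_n n \<omega>}. Sn n \<omega> \<le> t}"
    using sets.sets_into_space[OF A] by (auto simp: Sn_def min_def)
  finally show "{\<omega> \<in> {\<omega>\<in>A. T \<omega> < T_n n \<omega>}. Sn n \<omega> \<le> t} \<in> sets (natF E t)" .
qed

lemma sets_PS_T_infty: "A \<in> sets (PS E T) \<Longrightarrow> A \<in> sets (natF E \<infinity>)"
  using filtration.sets_pre_sigmaD[OF filtration_natF T, of A \<infinity>] by simp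

lemma inf_piece_in_PS:
  assumes A: "A \<in> sets (PS E T)"
  shows "{\<omega>\<in>A. Sn n \<omega> = \<infinity>} \<in> sets (PS E (Sn n))"
proof (rule CS_in_PS, unfold CS_def, intro CollectI allI)
  fix t :: ereal
  show "{\<omega> \<in> {\<omega>\<in>A. Sn n \<omega> = \<infinity>}. Sn n \<omega> \<le> t} \<in> sets (natF E t)"
  proof (cases "t = \<infinity>")
    case True
    have "{\<omega>\<in>paths E. Sn n \<omega> = \<infinity>} \<in> sets (natF E \<infinity>)"
      using filtration.stopping_time_eq_const[OF filtration_natF Sn_stop, of n \<infinity>] by (simp add: pred_def)
    then have "A \<inter> {\<omega>\<in>paths E. Sn n \<omega> = \<infinity>} \<in> sets (natF E \<infinity>)"
      using sets_PS_T_infty[OF A] by auto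
    also have "A \<inter> {\<omega>\<in>paths E. Sn n \<omega> = \<infinity>} = {\<omega> \<in> {\<omega>\<in>A. Sn n \<omega> = \<infinity>}. Sn n \<omega> \<le> t}"
      using True sets.sets_into_space[OF sets_PS_T_infty[OF A]] by auto
    finally show ?thesis using True by simp
  next
    case False
    have "{\<omega> \<in> {\<omega>\<in>A. Sn n \<omega> = \<infinity>}. Sn n \<omega> \<le> t} = {}"
    proof (rule equals0I)
      fix \<omega> assume "\<omega> \<in> {\<omega> \<in> {\<omega>\<in>A. Sn n \<omega> = \<infinity>}. Sn n \<omega> \<le> t}"
      then have "Sn n \<omega> \<le> t" "Sn n \<omega> = \<infinity>" by auto
      then have "t = \<infinity>" by (rule ereal_infty_less_eq2(1))
      with False show False by simp
    qed
    show ?thesis unfolding \<open>{\<omega> \<in> {\<omega>\<in>A. Sn n \<omega> = \<infinity>}. Sn n \<omega> \<le> t} = {}\<close> by (rule sets.empty_sets)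
  qed
qed

definition H where
  "H = {\<omega>\<in>paths E. \<forall>n\<in>{1..}. T_n n \<omega> \<le> T \<omega> \<and> Sn n \<omega> < \<infinity>}"

lemma H_in_Sig: "H \<in> Sig"
proof -
  interpret S: sigma_algebra "paths E" Sig by (rule sa_Sig)
  have X: "{\<omega>\<in>paths E. T \<omega> < T_n n \<omega>} \<in> Sig" if "n \<in> {1..}" for n
  proof -
    have "paths E \<in> sets (PS E T)" using sets.top[of "PS E T"] by simp
    from less_T_n_in_PS[OF this, of n] that show ?thesis by (intro in_Sig) auto
  qed
  have Y: "{\<omega>\<in>paths E. Sn n \<omega> < \<infinity>} \<in> Sig" if "n \<in> {1..}" for n
  proof -
    have m: "(\<lambda>x::ereal. x < \<infinity>) \<in> borel \<rightarrow>\<^sub>M count_space UNIV" by measurable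
    from PS_Sn_borel[OF m, of n] that show ?thesis by (intro in_Sig) auto
  qed
  have "H = paths E - ((\<Union>n\<in>{1::nat..}. {\<omega>\<in>paths E. T \<omega> < T_n n \<omega>}) \<union> (\<Union>n\<in>{1::nat..}. paths E - {\<omega>\<in>paths E. Sn n \<omega> < \<infinity>}))"
    unfolding H_def by (auto simp: not_less) (metis atLeast_iff leD)
  also have "\<dots> \<in> Sig"
    using X Y by (intro S.Diff S.top S.Un S.countable_UN''[OF countableI_type]) auto
  finally show ?thesis .
qed

end



context
  fixes E :: "'a::euclidean_space set" and T :: "(real \<Rightarrow> 'a option) \<Rightarrow> ereal"
  assumes T: "stopping_time (natF E) T"
begin

lemma H_facts:
  assumes "\<omega> \<in> H E T" "n \<ge> 1"
  shows "Sn T n \<omega> = T'_n n \<omega> \<and> T'_n n \<omega> < T_Delta \<omega>"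
proof -
  have a: "T_n n \<omega> \<le> T \<omega>" "Sn T n \<omega> < \<infinity>" using assms unfolding H_def[OF T] by auto
  then have "Sn T n \<omega> = T_n n \<omega>" by (simp add: Sn_def[OF T] min_def)
  with a show ?thesis by (auto simp: T_n_def split: if_splits)
qed

lemma H_paths: "H E T \<subseteq> paths E"
  unfolding H_def[OF T] by auto

lemma basic_piece:
  assumes s: "0 \<le> s" and B: "B \<in> sets (borelD E)"
  shows "{\<omega>\<in>paths E. \<omega> s \<in> B} \<inter> {\<omega>\<in>paths E. ereal s < Sn T n \<omega>} \<in> sets (PS E (Sn T n))"
proof (rule CS_in_PS, unfold CS_def, intro CollectI allI)
  fix t :: ereal
  show "{\<omega> \<in> {\<omega>\<in>paths E. \<omega> s \<in> B} \<inter> {\<omega>\<in>paths E. ereal s < Sn T n \<omega>}. Sn T n \<omega> \<le> t} \<in> sets (natF E t)"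
  proof (cases "ereal s < t")
    case True
    have "{\<omega>\<in>paths E. \<omega> s \<in> B} \<in> sets (natF E t)"
      using s True B by (intro natF_basic) auto
    moreover have "{\<omega>\<in>paths E. ereal s < Sn T n \<omega>} \<in> sets (natF E t)"
    proof -
      have "Measurable.pred (natF E t) (\<lambda>\<omega>. \<not> Sn T n \<omega> \<le> ereal s)"
        using True by (intro pred_intros_logic filtration.stopping_time_le_const[OF filtration_natF Sn_stop[OF T]]) auto
      then show ?thesis by (simp add: pred_def not_le)
    qed
    moreover have "{\<omega>\<in>paths E. Sn T n \<omega> \<le> t} \<in> sets (natF E t)"
      using stopping_timeD[OF Sn_stop[OF T], of n t] by (simp add: pred_def)
    ultimately have "{\<omega>\<in>paths E. \<omega> s \<in> B} \<inter> {\<omega>\<in>paths E. ereal s < Sn T n \<omega>} \<inter> {\<omega>\<in>paths E. Sn T n \<omega> \<le> t} \<in> sets (natF E t)"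
      by auto
    also have "{\<omega>\<in>paths E. \<omega> s \<in> B} \<inter> {\<omega>\<in>paths E. ereal s < Sn T n \<omega>} \<inter> {\<omega>\<in>paths E. Sn T n \<omega> \<le> t}
       = {\<omega> \<in> {\<omega>\<in>paths E. \<omega> s \<in> B} \<inter> {\<omega>\<in>paths E. ereal s < Sn T n \<omega>}. Sn T n \<omega> \<le> t}" by auto
    finally show ?thesis .
  next
    case False
    then have "{\<omega> \<in> {\<omega>\<in>paths E. \<omega> s \<in> B} \<inter> {\<omega>\<in>paths E. ereal s < Sn T n \<omega>}. Sn T n \<omega> \<le> t} = {}"
      by (auto simp: not_less)
    show ?thesis unfolding \<open>{\<omega> \<in> {\<omega>\<in>paths E. \<omega> s \<in> B} \<inter> {\<omega>\<in>paths E. ereal s < Sn T n \<omega>}. Sn T n \<omega> \<le> t} = {}\<close>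
      by (rule sets.empty_sets)
  qed
qed

lemma basic_identity:
  assumes \<omega>: "\<omega> \<in> H E T" and s: "0 \<le> s"
  shows "\<omega> s \<in> B \<longleftrightarrow> (\<exists>n\<in>{1..}. \<omega> s \<in> B \<and> ereal s < Sn T n \<omega>) \<or> (None \<in> B \<and> (\<forall>n\<in>{1..}. Sn T n \<omega> \<le> ereal s))"
proof -
  have p: "\<omega> \<in> paths E" using \<omega> H_paths by auto
  have HF: "\<And>n. n \<ge> 1 \<Longrightarrow> Sn T n \<omega> = T'_n n \<omega> \<and> T'_n n \<omega> < T_Delta \<omega>" using H_facts[OF \<omega>] by blast
  show ?thesis
  proof
    assume b: "\<omega> s \<in> B"
    show "(\<exists>n\<in>{1..}. \<omega> s \<in> B \<and> ereal s < Sn T n \<omega>) \<or> (None \<in> B \<and> (\<forall>n\<in>{1..}. Sn T n \<omega> \<le> ereal s))"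
    proof (cases "ereal s < T_Delta \<omega>")
      case True
      from explosion_sup[OF p s True] obtain n where "n \<ge> 1" "ereal s < T'_n n \<omega>" by blast
      then show ?thesis using HF b by auto
    next
      case False
      then have le: "T_Delta \<omega> \<le> ereal s" by simp
      then have "\<omega> s = None" using T_Delta_le_iff[OF p s] by simp
      moreover have "Sn T n \<omega> \<le> ereal s" if "n \<in> {1..}" for n
        using HF[of n] that le by auto
      ultimately show ?thesis using b by auto
    qed
  next
    assume "(\<exists>n\<in>{1..}. \<omega> s \<in> B \<and> ereal s < Sn T n \<omega>) \<or> (None \<in> B \<and> (\<forall>n\<in>{1..}. Sn T n \<omega> \<le> ereal s))"
    then show "\<omega> s \<in> B"
    proof
      assume a: "None \<in> B \<and> (\<forall>n\<in>{1..}. Sn T n \<omega> \<le> ereal s)"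
      have "\<not> ereal s < T_Delta \<omega>"
      proof
        assume "ereal s < T_Delta \<omega>"
        from explosion_sup[OF p s this] obtain n where "n \<ge> 1" "ereal s < T'_n n \<omega>" by blast
        then have "n \<in> {1..}" "Sn T n \<omega> = T'_n n \<omega>" using HF[of n] by auto
        moreover have "Sn T n \<omega> \<le> ereal s" using a \<open>n \<in> {1..}\<close> by blast
        ultimately have "T'_n n \<omega> \<le> ereal s" by simp
        with \<open>ereal s < T'_n n \<omega>\<close> show False by simp
      qed
      then have "\<omega> s = None" using T_Delta_le_iff[OF p s] by (simp add: not_less)
      with a show ?thesis by simp
    qed auto
  qed
qed

lemma AH_in_Sig:
  assumes A: "A \<in> sets (natF E \<infinity>)"
  shows "A \<inter> H E T \<in> Sig E T"
proof -
  interpret S: sigma_algebra "paths E" "Sig E T" by (rule sa_Sig[OF T])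
  have HS: "H E T \<in> Sig E T" by (rule H_in_Sig[OF T])
  from A have "A \<in> sigma_sets (paths E) {{\<omega> \<in> paths E. \<omega> s \<in> B} | s B. 0 \<le> s \<and> ereal s \<le> \<infinity> \<and> B \<in> sets (borelD E)}"
    by (simp add: sets_natF)
  then show ?thesis
  proof induct
    case (Basic a)
    then obtain s B where a: "a = {\<omega> \<in> paths E. \<omega> s \<in> B}" and s: "0 \<le> s" and B: "B \<in> sets (borelD E)" by auto
    have "a \<inter> H E T = H E T \<inter> ((\<Union>n\<in>{1::nat..}. {\<omega>\<in>paths E. \<omega> s \<in> B} \<inter> {\<omega>\<in>paths E. ereal s < Sn T n \<omega>}) \<union>
         (if None \<in> B then paths E - (\<Union>n\<in>{1::nat..}. {\<omega>\<in>paths E. \<not> Sn T n \<omega> \<le> ereal s}) else {}))"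
      using basic_identity[OF _ s, of _ B] H_paths unfolding a by (auto split: if_splits)
    also have "\<dots> \<in> Sig E T"
    proof -
      have 1: "{\<omega>\<in>paths E. \<omega> s \<in> B} \<inter> {\<omega>\<in>paths E. ereal s < Sn T n \<omega>} \<in> Sig E T" if "n \<in> {1..}" for n
        using that basic_piece[OF s B, of n] by (intro in_Sig[OF T]) auto
      have 2: "{\<omega>\<in>paths E. \<not> Sn T n \<omega> \<le> ereal s} \<in> Sig E T" if "n \<in> {1..}" for n
      proof -
        have m: "(\<lambda>x::ereal. \<not> x \<le> ereal s) \<in> borel \<rightarrow>\<^sub>M count_space UNIV" by measurable
        from PS_Sn_borel[OF T m, of n] that show ?thesis by (intro in_Sig[OF T]) auto
      qed
      have 3: "(\<Union>n\<in>{1::nat..}. {\<omega>\<in>paths E. \<omega> s \<in> B} \<inter> {\<omega>\<in>paths E. ereal s < Sn T n \<omega>}) \<in> Sig E T"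
        using 1 by (intro S.countable_UN''[OF countableI_type])
      have 4: "(if None \<in> B then paths E - (\<Union>n\<in>{1::nat..}. {\<omega>\<in>paths E. \<not> Sn T n \<omega> \<le> ereal s}) else {}) \<in> Sig E T"
        using 2 by (auto intro!: S.Diff S.top S.countable_UN''[OF countableI_type])
      show ?thesis using 3 4 HS by (intro S.Int S.Un)
    qed
    finally show ?case .
  next
    case Empty then show ?case by simp
  next
    case (Compl a)
    have "(paths E - a) \<inter> H E T = H E T - (a \<inter> H E T)" using H_paths by auto
    then show ?case using Compl HS by auto
  next
    case (Union a)
    have "(\<Union>i. a i) \<inter> H E T = (\<Union>i. a i \<inter> H E T)" by auto
    moreover have "(\<Union>i. a i \<inter> H E T) \<in> Sig E T" using Union(2) by (intro S.countable_UN) auto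
    ultimately show ?case by simp
  qed
qed

end



theorem proposition2p1:
  fixes E :: "'a::euclidean_space set"
    and T :: "(real \<Rightarrow> 'a option) \<Rightarrow> ereal"
  assumes "closed E"
    and "stopping_time (natF E) T"
    and "\<forall>\<omega>\<in>paths E. 0 \<le> T \<omega>"
  shows "sets (filtration.pre_sigma (paths E) (natF E) T)
           = sets (filtration.pre_sigma (paths E) (natF E) (\<lambda>\<omega>. min (T \<omega>) (T_expl \<omega>)))
         \<and> sets (filtration.pre_sigma (paths E) (natF E) T)
           = sigma_sets (paths E)
               (\<Union>n\<in>{1..}. sets (filtration.pre_sigma (paths E) (natF E) (\<lambda>\<omega>. min (T \<omega>) (T_n n \<omega>))))"
proof -
  note T = assms(2)
  have Sn_eq: "(\<lambda>\<omega>. min (T \<omega>) (T_n n \<omega>)) = Sn T n" for n by (simp add: Sn_def[OF T])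
  have SigE: "sigma_sets (paths E) (\<Union>n\<in>{1..}. sets (PS E (\<lambda>\<omega>. min (T \<omega>) (T_n n \<omega>)))) = Sig E T"
    unfolding Sn_eq Sig_def[OF T] ..
  have sub1: "Sig E T \<subseteq> sets (PS E T)"
  proof -
    have sa: "sigma_algebra (paths E) (sets (PS E T))"
      using sets.sigma_algebra_axioms[of "PS E T"] by simp
    have "sets (PS E (Sn T n)) \<subseteq> sets (PS E T)" for n
      by (rule mono_PS[OF T]) (simp add: Sn_def[OF T])
    then have "(\<Union>n\<in>{1..}. sets (PS E (Sn T n))) \<subseteq> sets (PS E T)" by blast
    then show ?thesis unfolding Sig_def[OF T]
      by (rule sigma_algebra.sigma_sets_subset[OF sa])
  qed
  have sub2: "sets (PS E T) \<subseteq> Sig E T"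
  proof
    fix A assume A: "A \<in> sets (PS E T)"
    interpret S: sigma_algebra "paths E" "Sig E T" by (rule sa_Sig[OF T])
    have Ap: "A \<subseteq> paths E" using sets.sets_into_space[OF A] by simp
    have "A = (\<Union>n\<in>{1::nat..}. {\<omega>\<in>A. T \<omega> < T_n n \<omega>}) \<union> (\<Union>n\<in>{1::nat..}. {\<omega>\<in>A. Sn T n \<omega> = \<infinity>}) \<union> (A \<inter> H E T)"
    proof (rule set_eqI, rule iffI)
      fix \<omega> assume w: "\<omega> \<in> A"
      show "\<omega> \<in> (\<Union>n\<in>{1::nat..}. {\<omega>\<in>A. T \<omega> < T_n n \<omega>}) \<union> (\<Union>n\<in>{1::nat..}. {\<omega>\<in>A. Sn T n \<omega> = \<infinity>}) \<union> (A \<inter> H E T)"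
      proof (cases "(\<exists>n\<in>{1::nat..}. T \<omega> < T_n n \<omega>) \<or> (\<exists>n\<in>{1::nat..}. Sn T n \<omega> = \<infinity>)")
        case True then show ?thesis using w by blast
      next
        case False
        have "T_n n \<omega> \<le> T \<omega> \<and> Sn T n \<omega> < \<infinity>" if "n \<in> {1..}" for n
        proof -
          have "\<not> T \<omega> < T_n n \<omega>" "Sn T n \<omega> \<noteq> \<infinity>" using False that by blast+
          then show ?thesis by (cases "Sn T n \<omega>") (auto simp: not_less)
        qed
        then have "\<omega> \<in> H E T" using w Ap unfolding H_def[OF T] by blast
        then show ?thesis using w by blast
      qed
    qed auto
    also have "\<dots> \<in> Sig E T"
      using in_Sig[OF T _ less_T_n_in_PS[OF T A]] in_Sig[OF T _ inf_piece_in_PS[OF T A]]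
        AH_in_Sig[OF T sets_PS_T_infty[OF T A]]
      by (intro S.Un S.countable_UN''[OF countableI_type]) auto
    finally show "A \<in> Sig E T" .
  qed
  have eq2: "sets (PS E T) = Sig E T" using sub1 sub2 by blast
  have Sx: "stopping_time (natF E) (\<lambda>\<omega>. min (T \<omega>) (T_expl \<omega>))"
    by (intro stopping_time_min T stopping_time_T_expl)
  have "Sig E T \<subseteq> sets (PS E (\<lambda>\<omega>. min (T \<omega>) (T_expl \<omega>)))"
  proof -
    have sa: "sigma_algebra (paths E) (sets (PS E (\<lambda>\<omega>. min (T \<omega>) (T_expl \<omega>))))"
      using sets.sigma_algebra_axioms[of "PS E (\<lambda>\<omega>. min (T \<omega>) (T_expl \<omega>))"] by simp
    have "sets (PS E (Sn T n)) \<subseteq> sets (PS E (\<lambda>\<omega>. min (T \<omega>) (T_expl \<omega>)))" if "n \<in> {1..}" for n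
    proof (rule mono_PS[OF Sx])
      fix \<omega> :: "real \<Rightarrow> 'a option"
      have "T_n n \<omega> \<le> T_expl \<omega>" using T_n_le_T_expl[of n \<omega>] that by simp
      then show "Sn T n \<omega> \<le> min (T \<omega>) (T_expl \<omega>)"
        unfolding Sn_def[OF T] by (rule min.mono[OF order_refl])
    qed
    then have "(\<Union>n\<in>{1..}. sets (PS E (Sn T n))) \<subseteq> sets (PS E (\<lambda>\<omega>. min (T \<omega>) (T_expl \<omega>)))" by blast
    then show ?thesis unfolding Sig_def[OF T]
      by (rule sigma_algebra.sigma_sets_subset[OF sa])
  qed
  moreover have "sets (PS E (\<lambda>\<omega>. min (T \<omega>) (T_expl \<omega>))) \<subseteq> sets (PS E T)"
    by (rule mono_PS[OF T]) simp
  ultimately have eq1: "sets (PS E T) = sets (PS E (\<lambda>\<omega>. min (T \<omega>) (T_expl \<omega>)))"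
    using eq2 by blast
  show ?thesis using eq1 eq2 SigE by simp
qed

end
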